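(* Let $T$ be a path forest of order $m^2$ that is impossibly burnable. Then the burning number of $T$ is greater than $m$; that is, $T$ is not well-burnable.
   Context: Graph burning on a finite simple graph $G$: initially all vertices are unburned. In each round $t\ge1$, first every unburned neighbour of a vertex that was burned by the end of round $t-1$ becomes burned, and a burning source is placed on (and burns) one unburned vertex; burned vertices stay burned. The burning number of $G$ is the least number of rounds after which all vertices are burned. A graph of order $N$ is well-burnable if its burning number is at most $\lceil\sqrt N\rceil$. A path forest is a disjoint union of paths, represented by the tuple $(l_1,\dots,l_n)$ of path orders. For $m\in\mathbb{N}$ and an integer $1\le l\le m^2$, let $B_m(l)$ be the least positive integer $t$ with $t\equiv l\pmod 2$ such that $l\le 2mt-t^2$. A path forest $(l_1,\dots,l_n)$ of order $m^2$ is impossibly burnable if $\sum_{i=1}^n B_m(l_i)>m$. *)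

theory Defs
  imports Complex_Main
begin

text \<open>A burning process is a list of rounds; in round t, first the fire
spreads from the set B of vertices burned by the end of round t-1 to all their
neighbours, then a burning source is placed on one unburned vertex (Some v).\<close>

definition spread :: "('a \<Rightarrow> 'a \<Rightarrow> bool) \<Rightarrow> 'a set \<Rightarrow> 'a set" where
  "spread E B = B \<union> {v. \<exists>u\<in>B. E u v}"

definition valid_source :: "'a set \<Rightarrow> 'a set \<Rightarrow> 'a option \<Rightarrow> bool" where
  "valid_source V C s = (case s of None \<Rightarrow> V \<subseteq> C | Some v \<Rightarrow> v \<in> V \<and> v \<notin> C)"

primrec burn_ok :: "'a set \<Rightarrow> ('a \<Rightarrow> 'a \<Rightarrow> bool) \<Rightarrow> 'a set \<Rightarrow> 'a option list \<Rightarrow> bool" where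
  "burn_ok V E B [] = True"
| "burn_ok V E B (s # ss) =
     (valid_source V (spread E B) s \<and> burn_ok V E (spread E B \<union> set_option s) ss)"

primrec burned :: "('a \<Rightarrow> 'a \<Rightarrow> bool) \<Rightarrow> 'a set \<Rightarrow> 'a option list \<Rightarrow> 'a set" where
  "burned E B [] = B"
| "burned E B (s # ss) = burned E (spread E B \<union> set_option s) ss"

definition burning_number :: "'a set \<Rightarrow> ('a \<Rightarrow> 'a \<Rightarrow> bool) \<Rightarrow> nat" where
  "burning_number V E = (LEAST k. \<exists>ss. length ss = k \<and> burn_ok V E {} ss \<and> V \<subseteq> burned E {} ss)"

definition well_burnable :: "'a set \<Rightarrow> ('a \<Rightarrow> 'a \<Rightarrow> bool) \<Rightarrow> bool" where
  "well_burnable V E \<longleftrightarrow> burning_number V E \<le> nat \<lceil>sqrt (real (card V))\<rceil>"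

text \<open>The path forest (l_1,...,l_n) (list ls): vertex (i,j) is the j-th vertex
of the i-th path, 0-indexed; consecutive vertices of a path are adjacent.\<close>

definition pf_vertices :: "nat list \<Rightarrow> (nat \<times> nat) set" where
  "pf_vertices ls = {(i, j). i < length ls \<and> j < ls ! i}"

definition pf_edge :: "nat list \<Rightarrow> nat \<times> nat \<Rightarrow> nat \<times> nat \<Rightarrow> bool" where
  "pf_edge ls x y \<longleftrightarrow> x \<in> pf_vertices ls \<and> y \<in> pf_vertices ls \<and>
     fst x = fst y \<and> (snd y = snd x + 1 \<or> snd x = snd y + 1)"

definition B_m :: "nat \<Rightarrow> nat \<Rightarrow> nat" where
  "B_m m l = (LEAST t. 0 < t \<and> t mod 2 = l mod 2 \<and>
                 int l \<le> 2 * int m * int t - int t ^ 2)"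

definition impossibly_burnable :: "nat \<Rightarrow> nat list \<Rightarrow> bool" where
  "impossibly_burnable m ls \<longleftrightarrow>
     (\<forall>l\<in>set ls. 1 \<le> l) \<and> sum_list ls = m ^ 2 \<and> (\<Sum>l\<leftarrow>ls. B_m m l) > m"

end

theory Submission
  imports Defs
begin

definition near :: "nat \<Rightarrow> nat \<times> nat \<Rightarrow> nat \<times> nat \<Rightarrow> bool" where
  "near r a w \<longleftrightarrow> fst w = fst a \<and> snd w \<le> snd a + r \<and> snd a \<le> snd w + r"

lemma near_trans: "near n a b \<Longrightarrow> near k b c \<Longrightarrow> near (n+k) a c"
  unfolding near_def by auto

lemma near_refl: "near n a a" by (simp add: near_def)

lemma spread_near: "a \<in> spread (pf_edge ls) B \<Longrightarrow> \<exists>b\<in>B. near 1 b a"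
proof -
  assume "a \<in> spread (pf_edge ls) B"
  then have "a \<in> B \<or> (\<exists>u\<in>B. pf_edge ls u a)" unfolding spread_def by auto
  then show ?thesis
  proof
    assume "a \<in> B" then show ?thesis by (auto intro: near_refl)
  next
    assume "\<exists>u\<in>B. pf_edge ls u a"
    then obtain u where "u \<in> B" "pf_edge ls u a" by blast
    then have "near 1 u a" unfolding pf_edge_def near_def by auto
    then show ?thesis using \<open>u \<in> B\<close> by blast
  qed
qed

lemma burned_near:
  "w \<in> burned (pf_edge ls) B ss \<Longrightarrow>
   (\<exists>a\<in>B. near (length ss) a w) \<or>
   (\<exists>t<length ss. \<exists>v. ss ! t = Some v \<and> near (length ss - 1 - t) v w)"
proof (induction ss arbitrary: B)
  case Nil
  then show ?case by (auto intro: near_refl)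
next
  case (Cons s ss)
  from Cons.prems have "w \<in> burned (pf_edge ls) (spread (pf_edge ls) B \<union> set_option s) ss" by simp
  from Cons.IH[OF this] show ?case
  proof
    assume "\<exists>a\<in>spread (pf_edge ls) B \<union> set_option s. near (length ss) a w"
    then obtain a where a: "a \<in> spread (pf_edge ls) B \<union> set_option s" "near (length ss) a w" by blast
    show ?case
    proof (cases "a \<in> spread (pf_edge ls) B")
      case True
      then obtain b where b: "b\<in>B" "near 1 b a" using spread_near by blast
      then have "near (1 + length ss) b w" using near_trans a(2) by blast
      then show ?thesis using b(1) by auto
    next
      case False
      then have "s = Some a" using a(1) by auto
      then show ?thesis using a(2) by (intro disjI2 exI[of _ 0]) auto
    qed
  next
    assume "\<exists>t<length ss. \<exists>v. ss ! t = Some v \<and> near (length ss - 1 - t) v w"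
    then obtain t v where "t < length ss" "ss ! t = Some v" "near (length ss - 1 - t) v w" by blast
    then show ?case by (intro disjI2 exI[of _ "Suc t"]) auto
  qed
qed

lemma odd_sum_bound:
  fixes U :: "nat set"
  assumes "U \<subseteq> {..<m}"
  shows "(\<Sum>u\<in>U. 2*u+1) + (m - card U)^2 \<le> m^2"
  using assms
proof (induction m arbitrary: U)
  case 0 then show ?case by simp
next
  case (Suc m)
  have fin: "finite U" using Suc.prems finite_subset by blast
  have sq: "(Suc x)^2 = x^2 + 2*x + 1" for x :: nat by (simp add: power2_eq_square)
  show ?case
  proof (cases "m \<in> U")
    case True
    let ?U = "U - {m}"
    have sub: "?U \<subseteq> {..<m}" using Suc.prems by auto
    have IH: "(\<Sum>u\<in>?U. 2*u+1) + (m - card ?U)^2 \<le> m^2" using Suc.IH[OF sub] .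
    have s: "(\<Sum>u\<in>U. 2*u+1) = (2*m+1) + (\<Sum>u\<in>?U. 2*u+1)" using sum.remove[OF fin True, of "\<lambda>u. 2*u+1"] by simp
    have c: "card U = Suc (card ?U)" using card.remove[OF fin True] .
    have "Suc m - card U = m - card ?U" using c by simp
    then show ?thesis using IH s sq[of m] by simp
  next
    case False
    then have sub: "U \<subseteq> {..<m}" using Suc.prems by (force simp: less_Suc_eq)
    have IH: "(\<Sum>u\<in>U. 2*u+1) + (m - card U)^2 \<le> m^2" using Suc.IH[OF sub] .
    have cU: "card U \<le> m" using card_mono[OF _ sub] by simp
    have "Suc m - card U = Suc (m - card U)" using cU by simp
    then have "(Suc m - card U)^2 = (m - card U)^2 + 2*(m - card U) + 1" using sq by simp
    then show ?thesis using IH sq[of m] cU by simp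
  qed
qed

lemma no_short_burn:
  fixes m :: nat and ls :: "nat list" and ss
  assumes pos: "\<forall>l\<in>set ls. 1 \<le> l"
    and sumls: "sum_list ls = m ^ 2"
    and imp: "m < (\<Sum>l\<leftarrow>ls. B_m m l)"
    and len: "length ss \<le> m"
    and cov: "pf_vertices ls \<subseteq> burned (pf_edge ls) {} ss"
  shows False
proof -
  define k where "k = length ss"
  define n where "n = length ls"
  define src where "src t = the (ss ! t)" for t
  define r where "r t = k - 1 - t" for t
  define g where "g t = 2 * r t + 1" for t
  define S where "S = {t. t < k \<and> ss ! t \<noteq> None \<and> fst (src t) < n}"
  define T where "T i = {t. t \<in> S \<and> fst (src t) = i}" for i
  define c where "c i = (\<Sum>t\<in>T i. g t)" for i
  have finS: "finite S" unfolding S_def by auto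
  have finT: "finite (T i)" for i using finS unfolding T_def by auto
  have Sk: "S \<subseteq> {..<k}" unfolding S_def by auto
  have Tk: "T i \<subseteq> {..<k}" for i using Sk unfolding T_def by auto
  have cover: "ls ! i \<le> c i" if "i < n" for i
  proof -
    define J where "J t = {snd (src t) - r t .. snd (src t) + r t}" for t
    have "{..<ls ! i} \<subseteq> (\<Union>t\<in>T i. J t)"
    proof
      fix j assume "j \<in> {..<ls ! i}"
      then have "(i, j) \<in> pf_vertices ls" using that unfolding pf_vertices_def n_def by auto
      then have "(i,j) \<in> burned (pf_edge ls) {} ss" using cov by auto
      from burned_near[OF this] obtain t v where tv: "t < k" "ss ! t = Some v" "near (k - 1 - t) v (i,j)"
        unfolding k_def by auto
      have sv: "src t = v" using tv unfolding src_def by simp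
      then have "t \<in> T i" using tv that unfolding T_def S_def near_def by auto
      moreover have "j \<in> J t" using tv sv unfolding J_def near_def r_def by auto
      ultimately show "j \<in> (\<Union>t\<in>T i. J t)" by auto
    qed
    then have "card {..<ls ! i} \<le> card (\<Union>t\<in>T i. J t)" by (intro card_mono) (auto simp: J_def finT)
    also have "\<dots> \<le> (\<Sum>t\<in>T i. card (J t))" by (rule card_UN_le[OF finT])
    also have "\<dots> \<le> (\<Sum>t\<in>T i. g t)" by (intro sum_mono) (auto simp: J_def g_def)
    finally show ?thesis by (simp add: c_def)
  qed
  have key: "(\<Sum>t\<in>X. g t) + (m - card X)^2 \<le> m^2" if "X \<subseteq> {..<k}" for X
  proof -
    have inj: "inj_on r X"
    proof (rule inj_onI)
      fix x y assume "x \<in> X" "y \<in> X" "r x = r y"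
      then have "x < k" "y < k" "k - 1 - x = k - 1 - y" using that unfolding r_def by auto
      then show "x = y" by arith
    qed
    have "r ` X \<subseteq> {..<m}" using that len unfolding r_def k_def by auto
    from odd_sum_bound[OF this] have "(\<Sum>u\<in>r ` X. 2*u+1) + (m - card (r ` X))^2 \<le> m^2" .
    moreover have "(\<Sum>u\<in>r ` X. 2*u+1) = (\<Sum>t\<in>X. g t)" using sum.reindex[OF inj] unfolding g_def by simp
    moreover have "card (r ` X) = card X" using card_image[OF inj] .
    ultimately show ?thesis by simp
  qed
  have grp: "(\<Sum>i<n. (\<Sum>t\<in>T i. h t)) = (\<Sum>t\<in>S. h t)" for h :: "nat \<Rightarrow> nat"
    unfolding T_def by (rule sum.group[OF finS]) (auto simp: S_def)
  have "(\<Sum>i<n. c i) = (\<Sum>t\<in>S. g t)" unfolding c_def by (rule grp)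
  also have "\<dots> \<le> m^2" using key[OF Sk] by simp
  finally have csum: "(\<Sum>i<n. c i) \<le> m^2" .
  have lsum: "(\<Sum>i<n. ls ! i) = m^2" using sumls by (simp add: sum_list_sum_nth atLeast0LessThan n_def)
  have eq: "ls ! i = c i" if "i < n" for i
  proof (rule ccontr)
    assume "ls ! i \<noteq> c i"
    then have "ls ! i < c i" using cover[OF that] by simp
    then have "(\<Sum>i<n. ls ! i) < (\<Sum>i<n. c i)"
      using cover that by (intro sum_strict_mono_ex1) auto
    then show False using csum lsum by simp
  qed
  have Ble: "B_m m (ls ! i) \<le> card (T i)" if "i < n" for i
  proof -
    let ?s = "card (T i)"
    have par: "c i = 2 * (\<Sum>t\<in>T i. r t) + ?s"
      unfolding c_def g_def sum.distrib by (simp add: sum_distrib_left)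
    have l1: "1 \<le> ls ! i" using pos that unfolding n_def by auto
    have spos: "0 < ?s"
    proof (rule ccontr)
      assume "\<not> 0 < ?s"
      then have "T i = {}" using finT by auto
      then show False using eq[OF that] l1 unfolding c_def by simp
    qed
    have sm: "?s \<le> m" using card_mono[OF _ Tk[of i]] len k_def by simp
    have kb: "c i + (m - ?s)^2 \<le> m^2" using key[OF Tk[of i]] unfolding c_def by simp
    then have "int (c i + (m - ?s)^2) \<le> int (m^2)" by (simp only: of_nat_le_iff)
    then have "int (c i) + (int m - int ?s)^2 \<le> (int m)^2" using sm by (simp add: of_nat_diff)
    moreover have "(int m - int ?s)^2 = (int m)^2 - 2*int m*int ?s + (int ?s)^2"
      by (simp add: power2_diff)
    ultimately have ineq: "int (ls ! i) \<le> 2 * int m * int ?s - int ?s ^ 2" using eq[OF that] by simp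
    have pm: "?s mod 2 = (ls ! i) mod 2" using eq[OF that] par by simp
    show ?thesis unfolding B_m_def
      by (rule Least_le) (use spos pm ineq in auto)
  qed
  have "(\<Sum>l\<leftarrow>ls. B_m m l) = (\<Sum>i<n. B_m m (ls ! i))"
    by (simp add: sum_list_sum_nth atLeast0LessThan n_def)
  also have "\<dots> \<le> (\<Sum>i<n. card (T i))" using Ble by (intro sum_mono) auto
  also have "\<dots> = (\<Sum>t\<in>S. 1)" using grp[of "\<lambda>_. 1"] by simp
  also have "\<dots> = card S" by simp
  also have "\<dots> \<le> k" using card_mono[OF _ Sk] by simp
  finally show False using imp len k_def by simp
qed

lemma burn_exists:
  assumes "finite V"
  shows "\<exists>ss. burn_ok V E B ss \<and> V \<subseteq> burned E B ss"
  using assms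
proof (induction "card (V - B)" arbitrary: B rule: less_induct)
  case less
  show ?case
  proof (cases "V \<subseteq> spread E B")
    case True
    then have "burn_ok V E B [None] \<and> V \<subseteq> burned E B [None]" by (simp add: valid_source_def)
    then show ?thesis by blast
  next
    case False
    then obtain v where v: "v \<in> V" "v \<notin> spread E B" by auto
    define B' where "B' = spread E B \<union> {v}"
    have Bsub: "B \<subseteq> spread E B" by (auto simp: spread_def)
    have "V - B' \<subset> V - B" using v Bsub unfolding B'_def by auto
    then have "card (V - B') < card (V - B)"
      by (rule psubset_card_mono[rotated]) (use less.prems in auto)
    then obtain ss where "burn_ok V E B' ss \<and> V \<subseteq> burned E B' ss" using less.hyps less.prems by blast
    then have "burn_ok V E B (Some v # ss) \<and> V \<subseteq> burned E B (Some v # ss)"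
      using v by (simp add: valid_source_def B'_def)
    then show ?thesis by blast
  qed
qed

theorem mainTheorem2:
  fixes m :: nat and ls :: "nat list"
  assumes "\<forall>l\<in>set ls. 1 \<le> l"
    and "sum_list ls = m ^ 2"
    and "impossibly_burnable m ls"
  shows "m < burning_number (pf_vertices ls) (pf_edge ls) \<and>
         \<not> well_burnable (pf_vertices ls) (pf_edge ls)"
proof -
  let ?V = "pf_vertices ls" and ?E = "pf_edge ls"
  have sig: "?V = Sigma {..<length ls} (\<lambda>i. {..<ls!i})" by (auto simp: pf_vertices_def)
  have fin: "finite ?V" using sig by simp
  have card: "card ?V = m^2" using sig assms(2)
    by (simp add: card_SigmaI sum_list_sum_nth atLeast0LessThan)
  have imp: "m < (\<Sum>l\<leftarrow>ls. B_m m l)" using assms(3) by (simp add: impossibly_burnable_def)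
  obtain ss0 where "burn_ok ?V ?E {} ss0 \<and> ?V \<subseteq> burned ?E {} ss0" using burn_exists[OF fin] by blast
  hence ex: "\<exists>k ss. length ss = k \<and> burn_ok ?V ?E {} ss \<and> ?V \<subseteq> burned ?E {} ss" by blast
  have lt: "m < burning_number ?V ?E"
  proof (rule ccontr)
    assume a: "\<not> m < burning_number ?V ?E"
    obtain ss where "length ss = burning_number ?V ?E" "?V \<subseteq> burned ?E {} ss"
      using LeastI_ex[OF ex] unfolding burning_number_def by blast
    moreover have "length ss \<le> m" using a calculation(1) by simp
    ultimately show False using no_short_burn[OF assms(1,2) imp] by blast
  qed
  have "sqrt (real (card ?V)) = real m" using card by (simp add: real_sqrt_abs)
  then have "nat \<lceil>sqrt (real (card ?V))\<rceil> = m" by simp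
  then show ?thesis using lt unfolding well_burnable_def by simp
qed

end
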